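(* Let $E$ be an ordered Banach space, $I$ an interval, and $f:I\rightarrow E$ a continuous function which is three times differentiable on the interior of $I$. Then $f$ is $3$-convex if and only if $f'''(t)\geq0$ (i.e. $f'''(t)\in E_+$) for all $t$ in the interior of $I$.
   Context: An ordered Banach space is a Banach space $E$ with a closed convex cone $E_+$ such that $E=E_+-E_+$, $(-E_+)\cap E_+=\{0\}$, ordered by $x\leq y$ iff $y-x\in E_+$, and such that $0\leq x\leq y$ implies $\|x\|\leq\|y\|$. A function $f:I\rightarrow E$ is $3$-convex if for all $x_0<x_1<x_2<x_3$ in $I$ the divided difference $[x_0,x_1,x_2,x_3;f]=\sum_{j=0}^{3}\frac{f(x_j)}{\prod_{k\neq j}(x_j-x_k)}$ belongs to $E_+$. Derivatives are taken in the norm of $E$. *)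

theory Defs
  imports "HOL-Analysis.Analysis"
begin

text \<open>An ordered Banach space: a Banach space together with a positive cone P
  (closed, convex, cone, generating, proper) such that the norm is monotone on P.
  The order is x \<le> y iff y - x \<in> P.\<close>
definition ordered_banach_cone :: "'a::banach set \<Rightarrow> bool" where
  "ordered_banach_cone P \<longleftrightarrow>
     closed P \<and> convex P \<and> cone P \<and>
     (\<forall>x. \<exists>a\<in>P. \<exists>b\<in>P. x = a - b) \<and>
     P \<inter> uminus ` P = {0} \<and>
     (\<forall>x y. x \<in> P \<and> y - x \<in> P \<longrightarrow> norm x \<le> norm y)"

definition divdiff3 :: "(real \<Rightarrow> 'a::real_vector) \<Rightarrow> real \<Rightarrow> real \<Rightarrow> real \<Rightarrow> real \<Rightarrow> 'a" where
  "divdiff3 f x0 x1 x2 x3 =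
     (1 / ((x0 - x1) * (x0 - x2) * (x0 - x3))) *\<^sub>R f x0 +
     (1 / ((x1 - x0) * (x1 - x2) * (x1 - x3))) *\<^sub>R f x1 +
     (1 / ((x2 - x0) * (x2 - x1) * (x2 - x3))) *\<^sub>R f x2 +
     (1 / ((x3 - x0) * (x3 - x1) * (x3 - x2))) *\<^sub>R f x3"

definition three_convex_on :: "'a::real_vector set \<Rightarrow> real set \<Rightarrow> (real \<Rightarrow> 'a) \<Rightarrow> bool" where
  "three_convex_on P I f \<longleftrightarrow>
     (\<forall>x0 x1 x2 x3. x0 \<in> I \<and> x1 \<in> I \<and> x2 \<in> I \<and> x3 \<in> I \<and> x0 < x1 \<and> x1 < x2 \<and> x2 < x3
        \<longrightarrow> divdiff3 f x0 x1 x2 x3 \<in> P)"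

end

theory Submission
  imports Defs
begin


lemma obc_facts:
  assumes "ordered_banach_cone P"
  shows "closed P" "0 \<in> P" "\<And>x y. x \<in> P \<Longrightarrow> y \<in> P \<Longrightarrow> x + y \<in> P"
    "\<And>x c. x \<in> P \<Longrightarrow> 0 \<le> c \<Longrightarrow> c *\<^sub>R x \<in> P"
proof -
  have cc: "convex P" "cone P" "P \<inter> uminus ` P = {0}" "closed P"
    using assms unfolding ordered_banach_cone_def by auto
  show "closed P" by (fact cc(4))
  show "0 \<in> P" using cc(3) by auto
  show "\<And>x y. x \<in> P \<Longrightarrow> y \<in> P \<Longrightarrow> x + y \<in> P" using cc convex_cone by blast
  show "\<And>x c. x \<in> P \<Longrightarrow> 0 \<le> c \<Longrightarrow> c *\<^sub>R x \<in> P" using cc(2) unfolding cone_def by blast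
qed

lemma infdist_add_cone:
  assumes "ordered_banach_cone P" "q \<in> P"
  shows "infdist (x + q) P \<le> infdist x P"
proof -
  have ne: "P \<noteq> {}" using obc_facts(2)[OF assms(1)] by auto
  show ?thesis unfolding infdist_notempty[OF ne]
  proof (rule cINF_greatest[OF ne])
    fix p assume "p \<in> P"
    then have "p + q \<in> P" using obc_facts(3)[OF assms(1)] assms(2) by blast
    then have "infdist (x + q) P \<le> dist (x + q) (p + q)" by (rule infdist_le)
    also have "\<dots> = dist x p" by (simp add: dist_norm)
    finally show "(INF a\<in>P. dist (x + q) a) \<le> dist x p" using infdist_notempty[OF ne] by simp
  qed
qed

lemma creep:
  fixes g g' :: "real \<Rightarrow> 'a::banach"
  assumes P: "ordered_banach_cone P" and cd: "c \<le> d" and cont: "continuous_on {c..d} g"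
    and der: "\<And>t. c \<le> t \<Longrightarrow> t < d \<Longrightarrow> (g has_vector_derivative g' t) (at t) \<and> g' t \<in> P"
  shows "g d - g c \<in> P"
proof (cases "c = d")
  case True then show ?thesis using obc_facts(2)[OF P] by simp
next
  case False
  with cd have cd': "c < d" by simp
  have main: "infdist (g d - g c) P \<le> e * (d - c)" if e: "e > 0" for e
  proof -
    define S where "S = {t \<in> {c..d}. infdist (g t - g c) P \<le> e * (t - c)}"
    have clS: "closed S" unfolding S_def
      by (intro continuous_on_closed_Collect_le continuous_intros cont)
    have cS: "c \<in> S" using cd obc_facts(2)[OF P] by (simp add: S_def)
    have bS: "bdd_above S" unfolding S_def by (auto intro: bdd_aboveI[of _ d])
    define s where "s = Sup S"
    have sS: "s \<in> S" unfolding s_def using closed_contains_Sup[OF _ bS clS] cS by blast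
    have sd: "s \<le> d" "c \<le> s" using sS by (auto simp: S_def)
    have "s = d"
    proof (rule ccontr)
      assume "s \<noteq> d"
      with sd have sd2: "s < d" by simp
      from der[OF sd(2) sd2] have ds: "(g has_derivative (\<lambda>x. x *\<^sub>R g' s)) (at s)" "g' s \<in> P"
        by (auto simp: has_vector_derivative_def)
      then obtain \<delta> where \<delta>: "\<delta> > 0"
        "\<And>y. norm (y - s) < \<delta> \<Longrightarrow> norm (g y - g s - (y - s) *\<^sub>R g' s) \<le> e * norm (y - s)"
        unfolding has_derivative_at_alt using e by blast
      define h where "h = min (\<delta>/2) ((d - s)/2)"
      have h: "h > 0" "h < \<delta>" "s + h \<le> d" using \<delta>(1) sd2 by (auto simp: h_def min_def field_simps)
      have r: "norm (g (s+h) - g s - h *\<^sub>R g' s) \<le> e * h"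
        using \<delta>(2)[of "s+h"] h by simp
      have eq: "g (s+h) - g c = ((g s - g c) + (g (s+h) - g s - h *\<^sub>R g' s)) + h *\<^sub>R g' s"
        by (simp add: algebra_simps)
      have hq: "h *\<^sub>R g' s \<in> P" using obc_facts(4)[OF P ds(2)] h by simp
      have "infdist (g (s+h) - g c) P \<le> infdist ((g s - g c) + (g (s+h) - g s - h *\<^sub>R g' s)) P"
        unfolding eq by (rule infdist_add_cone[OF P hq])
      also have "\<dots> \<le> infdist (g s - g c) P + norm (g (s+h) - g s - h *\<^sub>R g' s)"
        using infdist_triangle[of "(g s - g c) + (g (s+h) - g s - h *\<^sub>R g' s)" P "g s - g c"]
        by (simp add: dist_norm algebra_simps)
      also have "\<dots> \<le> e * (s - c) + e * h" using sS r by (simp add: S_def)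
      finally have "s + h \<in> S" using h sd by (simp add: S_def algebra_simps)
      then have "s + h \<le> s" unfolding s_def by (rule cSup_upper[OF _ bS])
      then show False using h by simp
    qed
    then show ?thesis using sS by (simp add: S_def)
  qed
  have z: "infdist (g d - g c) P = 0"
  proof (rule ccontr)
    assume "infdist (g d - g c) P \<noteq> 0"
    then have pos: "infdist (g d - g c) P > 0" using infdist_nonneg[of "g d - g c" P] by simp
    have "infdist (g d - g c) P \<le> (infdist (g d - g c) P / (2 * (d - c))) * (d - c)"
      using main[of "infdist (g d - g c) P / (2 * (d - c))"] pos cd' by simp
    then show False using pos cd' by (simp add: field_simps)
  qed
  have ne: "P \<noteq> {}" using obc_facts(2)[OF P] by auto
  show ?thesis using z in_closure_iff_infdist_zero[OF ne] closure_closed[OF obc_facts(1)[OF P]] by simp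
qed

lemma mono_cone:
  fixes g g' :: "real \<Rightarrow> 'a::banach"
  assumes P: "ordered_banach_cone P" and ab: "a \<le> b" and cont: "continuous_on {a..b} g"
    and der: "\<And>t. a < t \<Longrightarrow> t < b \<Longrightarrow> (g has_vector_derivative g' t) (at t) \<and> g' t \<in> P"
  shows "g b - g a \<in> P"
proof (cases "a = b")
  case True then show ?thesis using obc_facts(2)[OF P] by simp
next
  case False
  with ab have ab': "a < b" by simp
  have ev: "eventually (\<lambda>c. g b - g c \<in> P) (at_right a)"
  proof -
    have "eventually (\<lambda>c. c < b) (at_right a)"
      unfolding eventually_at_right_field using ab' by auto
    moreover have "eventually (\<lambda>c. a < c) (at_right a)" by (rule eventually_at_right_less)
    ultimately show ?thesis
    proof eventually_elim
      case (elim c)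
      show ?case
        by (rule creep[OF P, of c b g g']) (use elim der in \<open>auto intro: continuous_on_subset[OF cont]\<close>)
    qed
  qed
  have lim: "((\<lambda>c. g b - g c) \<longlongrightarrow> g b - g a) (at_right a)"
  proof (intro tendsto_diff tendsto_const)
    have "eventually (\<lambda>c. c < b) (at_right a)"
      unfolding eventually_at_right_field using ab' by auto
    moreover have "eventually (\<lambda>c. a < c) (at_right a)" by (rule eventually_at_right_less)
    ultimately have "eventually (\<lambda>c. c \<in> {a..b}) (at_right a)"
      by eventually_elim auto
    then show "(g \<longlongrightarrow> g a) (at_right a)"
      using continuous_on_tendsto_compose[OF cont, of "\<lambda>x. x" a "at_right a"] ab
      by (auto intro: tendsto_ident_at)
  qed
  show ?thesis by (rule Lim_in_closed_set[OF obc_facts(1)[OF P] ev _ lim]) simp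
qed

lemma dq_lim:
  fixes g :: "real \<Rightarrow> 'a::real_normed_vector"
  assumes "(g has_vector_derivative v) (at x)"
  shows "((\<lambda>h. (1/h) *\<^sub>R (g (x + h) - g x)) \<longlongrightarrow> v) (at_right 0)"
proof -
  have "(\<lambda>h. norm (g (x + h) - g x - h *\<^sub>R v) / norm h) \<midarrow>0\<rightarrow> 0"
    using assms unfolding has_vector_derivative_def has_derivative_at by simp
  then have "((\<lambda>h. norm ((1/h) *\<^sub>R (g (x + h) - g x) - v)) \<longlongrightarrow> 0) (at 0)"
  proof (rule Lim_transform_eventually)
    show "eventually (\<lambda>h. norm (g (x + h) - g x - h *\<^sub>R v) / norm h = norm ((1/h) *\<^sub>R (g (x + h) - g x) - v)) (at 0)"
      unfolding eventually_at_filter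
    proof (intro always_eventually allI impI)
      fix h :: real assume "h \<noteq> 0"
      then have "(1/h) *\<^sub>R (g (x + h) - g x) - v = (1/h) *\<^sub>R (g (x + h) - g x - h *\<^sub>R v)"
        by (simp add: algebra_simps)
      then show "norm (g (x + h) - g x - h *\<^sub>R v) / norm h = norm ((1/h) *\<^sub>R (g (x + h) - g x) - v)"
        by (simp add: divide_inverse mult.commute)
    qed
  qed
  then have "((\<lambda>h. (1/h) *\<^sub>R (g (x + h) - g x)) \<longlongrightarrow> v) (at 0)"
  proof -
    assume a: "((\<lambda>h. norm ((1/h) *\<^sub>R (g (x + h) - g x) - v)) \<longlongrightarrow> 0) (at 0)"
    have "((\<lambda>h. (1/h) *\<^sub>R (g (x + h) - g x) - v) \<longlongrightarrow> 0) (at 0)"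
      using a by (simp only: tendsto_norm_zero_iff)
    from tendsto_add[OF this tendsto_const[of v]] show ?thesis by simp
  qed
  then show ?thesis using tendsto_mono at_within_le_at by blast
qed



definition Rm :: "(real \<Rightarrow> 'a::real_normed_vector) \<Rightarrow> (real \<Rightarrow> 'a) \<Rightarrow> (real \<Rightarrow> 'a) \<Rightarrow> real \<Rightarrow> real \<Rightarrow> 'a" where
  "Rm f f1 f2 a t = f t - f a - (t - a) *\<^sub>R f1 a - ((t - a)^2 / 2) *\<^sub>R f2 a"

lemma Rm_same[simp]: "Rm f f1 f2 a a = 0"
  by (simp add: Rm_def)

lemma Rm_deriv:
  assumes "(g has_vector_derivative gA a) (at a)" "(gA has_vector_derivative gB a) (at a)"
    "(gB has_vector_derivative gC a) (at a)"
  shows "((\<lambda>a. Rm g gA gB a t) has_vector_derivative (- (((t - a)^2 / 2) *\<^sub>R gC a))) (at a)"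
proof -
  have "((\<lambda>a. g t - g a - (t - a) *\<^sub>R gA a - ((t - a)^2 / 2) *\<^sub>R gB a) has_vector_derivative
     (0 - gA a - ((t - a) *\<^sub>R gB a + (-1) *\<^sub>R gA a) - (((t - a)^2 / 2) *\<^sub>R gC a + (- (t - a)) *\<^sub>R gB a))) (at a)"
    by (intro has_vector_derivative_diff has_vector_derivative_const has_vector_derivative_scaleR assms
        derivative_eq_intros) auto
  then show ?thesis unfolding Rm_def by (simp add: algebra_simps)
qed

lemma piece:
  fixes f f1 f2 f3 :: "real \<Rightarrow> 'a::banach"
  assumes P: "ordered_banach_cone P" and pq: "p \<le> q" and sub: "{p..q} \<subseteq> J"
    and der: "\<And>t. t \<in> J \<Longrightarrow> (f has_vector_derivative f1 t) (at t) \<and> (f1 has_vector_derivative f2 t) (at t)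
          \<and> (f2 has_vector_derivative f3 t) (at t) \<and> f3 t \<in> P"
    and pos: "\<And>a. p < a \<Longrightarrow> a < q \<Longrightarrow> 0 \<le> \<alpha> * (u - a)^2 + \<beta> * (v - a)^2 + \<gamma> * (w - a)^2"
  shows "(\<alpha> *\<^sub>R Rm f f1 f2 p u + \<beta> *\<^sub>R Rm f f1 f2 p v + \<gamma> *\<^sub>R Rm f f1 f2 p w)
       - (\<alpha> *\<^sub>R Rm f f1 f2 q u + \<beta> *\<^sub>R Rm f f1 f2 q v + \<gamma> *\<^sub>R Rm f f1 f2 q w) \<in> P"
proof -
  define G where "G a = - (\<alpha> *\<^sub>R Rm f f1 f2 a u + \<beta> *\<^sub>R Rm f f1 f2 a v + \<gamma> *\<^sub>R Rm f f1 f2 a w)" for a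
  define G' where "G' a = ((\<alpha> * (u - a)^2 + \<beta> * (v - a)^2 + \<gamma> * (w - a)^2) / 2) *\<^sub>R f3 a" for a
  have dG: "(G has_vector_derivative G' a) (at a)" if "a \<in> J" for a
  proof -
    from der[OF that] have d: "(f has_vector_derivative f1 a) (at a)" "(f1 has_vector_derivative f2 a) (at a)"
          "(f2 has_vector_derivative f3 a) (at a)" by auto
    show ?thesis unfolding G_def
      apply (rule has_vector_derivative_eq_rhs)
       apply (rule has_vector_derivative_minus)
       apply (rule has_vector_derivative_add)+
         apply (rule has_vector_derivative_scaleR[OF DERIV_const], rule Rm_deriv[where g=f and gA=f1 and gB=f2 and gC=f3 and a=a, OF d])+
      apply (simp add: G'_def algebra_simps add_divide_distrib)
      done
  qed
  have cont: "continuous_on {p..q} G"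
    by (rule continuous_at_imp_continuous_on)
      (use dG sub in \<open>blast intro: has_vector_derivative_continuous\<close>)
  have "G q - G p \<in> P"
  proof (rule mono_cone[OF P pq cont])
    fix t assume t: "p < t" "t < q"
    then have tJ: "t \<in> J" using sub by auto
    show "(G has_vector_derivative G' t) (at t) \<and> G' t \<in> P"
      using dG[OF tJ] obc_facts(4)[OF P, of "f3 t"] der[OF tJ] pos[OF t] unfolding G'_def by simp
  qed
  then show ?thesis unfolding G_def by (simp add: algebra_simps)
qed



lemma dd_ids:
  fixes x0 x1 x2 x3 :: real
  assumes "x0 < x1" "x1 < x2" "x2 < x3"
  defines "c0 \<equiv> 1 / ((x0 - x1) * (x0 - x2) * (x0 - x3))"
    and "c1 \<equiv> 1 / ((x1 - x0) * (x1 - x2) * (x1 - x3))"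
    and "c2 \<equiv> 1 / ((x2 - x0) * (x2 - x1) * (x2 - x3))"
    and "c3 \<equiv> 1 / ((x3 - x0) * (x3 - x1) * (x3 - x2))"
  shows "c0 + c1 + c2 + c3 = 0" "c0 * x0 + c1 * x1 + c2 * x2 + c3 * x3 = 0"
    "c0 * x0^2 + c1 * x1^2 + c2 * x2^2 + c3 * x3^2 = 0"
proof -
  define D where "D = (x1-x0)*(x2-x0)*(x3-x0)*(x2-x1)*(x3-x1)*(x3-x2)"
  have Dpos: "D \<noteq> 0" unfolding D_def using assms by simp
  have e0: "c0 = - ((x2-x1)*(x3-x1)*(x3-x2)) / D"
    unfolding c0_def D_def using assms by (simp add: divide_simps; simp add: algebra_simps)
  have e1: "c1 = ((x2-x0)*(x3-x0)*(x3-x2)) / D"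
    unfolding c1_def D_def using assms by (simp add: divide_simps; simp add: algebra_simps)
  have e2: "c2 = - ((x1-x0)*(x3-x0)*(x3-x1)) / D"
    unfolding c2_def D_def using assms by (simp add: divide_simps; simp add: algebra_simps)
  have e3: "c3 = ((x1-x0)*(x2-x0)*(x2-x1)) / D"
    unfolding c3_def D_def using assms by (simp add: divide_simps; simp add: algebra_simps)
  have p0: "- ((x2-x1)*(x3-x1)*(x3-x2)) + ((x2-x0)*(x3-x0)*(x3-x2)) - ((x1-x0)*(x3-x0)*(x3-x1)) + ((x1-x0)*(x2-x0)*(x2-x1)) = 0"
    by algebra
  have p1: "- ((x2-x1)*(x3-x1)*(x3-x2)) * x0 + ((x2-x0)*(x3-x0)*(x3-x2)) * x1 - ((x1-x0)*(x3-x0)*(x3-x1)) * x2 + ((x1-x0)*(x2-x0)*(x2-x1)) * x3 = 0"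
    by algebra
  have p2: "- ((x2-x1)*(x3-x1)*(x3-x2)) * x0^2 + ((x2-x0)*(x3-x0)*(x3-x2)) * x1^2 - ((x1-x0)*(x3-x0)*(x3-x1)) * x2^2 + ((x1-x0)*(x2-x0)*(x2-x1)) * x3^2 = 0"
    by algebra
  show "c0 + c1 + c2 + c3 = 0" unfolding e0 e1 e2 e3 using p0 Dpos
    by (simp add: divide_simps; simp add: algebra_simps)
  show "c0 * x0 + c1 * x1 + c2 * x2 + c3 * x3 = 0" unfolding e0 e1 e2 e3 using p1 Dpos
    by (simp add: divide_simps; simp add: algebra_simps)
  show "c0 * x0^2 + c1 * x1^2 + c2 * x2^2 + c3 * x3^2 = 0" unfolding e0 e1 e2 e3 using p2 Dpos
    by (simp add: divide_simps; simp add: algebra_simps)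
qed



lemma mid_pos:
  fixes x0 x1 x2 x3 a :: real
  assumes "x0 < x1" "x1 < x2" "x2 < x3" "x1 \<le> a" "a \<le> x2"
  shows "0 \<le> 1 / ((x2 - x0) * (x2 - x1) * (x2 - x3)) * (x2 - a)^2 + 1 / ((x3 - x0) * (x3 - x1) * (x3 - x2)) * (x3 - a)^2"
proof -
  have A: "(x2 - a) / (x2 - x0) \<le> (x3 - a) / (x3 - x0)"
  proof -
    have "(x3 - a) * (x2 - x0) - (x2 - a) * (x3 - x0) = (x3 - x2) * (a - x0)" by (simp add: algebra_simps)
    moreover have "0 \<le> (x3 - x2) * (a - x0)" using assms by simp
    ultimately have "(x2 - a) * (x3 - x0) \<le> (x3 - a) * (x2 - x0)" by linarith
    then show ?thesis using assms by (simp add: divide_simps)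
  qed
  have B: "(x2 - a) / (x2 - x1) \<le> (x3 - a) / (x3 - x1)"
  proof -
    have "(x3 - a) * (x2 - x1) - (x2 - a) * (x3 - x1) = (x3 - x2) * (a - x1)" by (simp add: algebra_simps)
    moreover have "0 \<le> (x3 - x2) * (a - x1)" using assms by simp
    ultimately have "(x2 - a) * (x3 - x1) \<le> (x3 - a) * (x2 - x1)" by linarith
    then show ?thesis using assms by (simp add: divide_simps)
  qed
  have C: "((x2 - a) / (x2 - x0)) * ((x2 - a) / (x2 - x1)) \<le> ((x3 - a) / (x3 - x0)) * ((x3 - a) / (x3 - x1))"
    by (rule mult_mono[OF A B]) (use assms in auto)
  have e2: "1 / ((x2 - x0) * (x2 - x1) * (x2 - x3)) * (x2 - a)^2 = - (((x2 - a) / (x2 - x0)) * ((x2 - a) / (x2 - x1))) / (x3 - x2)"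
    using assms by (simp add: divide_simps power2_eq_square) (simp add: algebra_simps)
  have e3: "1 / ((x3 - x0) * (x3 - x1) * (x3 - x2)) * (x3 - a)^2 = (((x3 - a) / (x3 - x0)) * ((x3 - a) / (x3 - x1))) / (x3 - x2)"
    using assms by (simp add: divide_simps power2_eq_square)
  show ?thesis unfolding e2 e3 using C assms by (simp add: divide_simps)
qed



lemma core_back:
  fixes f f1 f2 f3 :: "real \<Rightarrow> 'a::banach"
  assumes P: "ordered_banach_cone P" and J: "is_interval J"
    and der: "\<And>t. t \<in> J \<Longrightarrow> (f has_vector_derivative f1 t) (at t) \<and> (f1 has_vector_derivative f2 t) (at t)
          \<and> (f2 has_vector_derivative f3 t) (at t) \<and> f3 t \<in> P"
    and x: "x0 < x1" "x1 < x2" "x2 < x3" "x0 \<in> J" "x3 \<in> J"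
  shows "divdiff3 f x0 x1 x2 x3 \<in> P"
proof -
  define c0 where "c0 = 1 / ((x0 - x1) * (x0 - x2) * (x0 - x3))"
  define c1 where "c1 = 1 / ((x1 - x0) * (x1 - x2) * (x1 - x3))"
  define c2 where "c2 = 1 / ((x2 - x0) * (x2 - x1) * (x2 - x3))"
  define c3 where "c3 = 1 / ((x3 - x0) * (x3 - x1) * (x3 - x2))"
  note ids = dd_ids[OF x(1-3), folded c0_def c1_def c2_def c3_def]
  have sq: "c1 * (x1 - a)^2 + c2 * (x2 - a)^2 + c3 * (x3 - a)^2 = - c0 * (x0 - a)^2" for a
  proof -
    have "c0 * (x0 - a)^2 + c1 * (x1 - a)^2 + c2 * (x2 - a)^2 + c3 * (x3 - a)^2
      = (c0 * x0^2 + c1 * x1^2 + c2 * x2^2 + c3 * x3^2) - 2 * a * (c0 * x0 + c1 * x1 + c2 * x2 + c3 * x3)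
        + a^2 * (c0 + c1 + c2 + c3)"
      by (simp add: power2_eq_square algebra_simps)
    then show ?thesis using ids by simp
  qed
  have lin: "c1 * (x1 - x0) + c2 * (x2 - x0) + c3 * (x3 - x0) = 0"
  proof -
    have "c1 * (x1 - x0) + c2 * (x2 - x0) + c3 * (x3 - x0) = (c0 * x0 + c1 * x1 + c2 * x2 + c3 * x3) - x0 * (c0 + c1 + c2 + c3)"
      by (simp add: algebra_simps)
    then show ?thesis using ids by simp
  qed
  have c0neg: "c0 < 0"
  proof -
    have "(x0 - x1) * (x0 - x2) > 0" using x by (intro mult_neg_neg) auto
    then have "(x0 - x1) * (x0 - x2) * (x0 - x3) < 0" using x by (intro mult_pos_neg) auto
    then show ?thesis unfolding c0_def by simp
  qed
  have c3pos: "c3 > 0" unfolding c3_def using x by simp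
  have iv: "\<And>a b t. a \<in> J \<Longrightarrow> b \<in> J \<Longrightarrow> a \<le> t \<Longrightarrow> t \<le> b \<Longrightarrow> t \<in> J"
    using J unfolding is_interval_1 by blast
  have sub: "{x0..x3} \<subseteq> J" using iv[OF x(4,5)] by auto
  let ?R = "Rm f f1 f2"
  have T0: "(c1 *\<^sub>R ?R x0 x1 + c2 *\<^sub>R ?R x0 x2 + c3 *\<^sub>R ?R x0 x3) - (c1 *\<^sub>R ?R x1 x1 + c2 *\<^sub>R ?R x1 x2 + c3 *\<^sub>R ?R x1 x3) \<in> P"
  proof (rule piece[OF P _ _ der])
    show "{x0..x1} \<subseteq> J" using sub x by auto
    fix a show "0 \<le> c1 * (x1 - a)^2 + c2 * (x2 - a)^2 + c3 * (x3 - a)^2"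
      unfolding sq using mult_nonpos_nonneg[of c0 "(x0 - a)^2"] c0neg by simp
  qed (use x in auto)
  have T1: "(0 *\<^sub>R ?R x1 x1 + c2 *\<^sub>R ?R x1 x2 + c3 *\<^sub>R ?R x1 x3) - (0 *\<^sub>R ?R x2 x1 + c2 *\<^sub>R ?R x2 x2 + c3 *\<^sub>R ?R x2 x3) \<in> P"
  proof (rule piece[OF P _ _ der])
    show "{x1..x2} \<subseteq> J" using sub x by auto
    fix a assume "x1 < a" "a < x2"
    then show "0 \<le> 0 * (x1 - a)^2 + c2 * (x2 - a)^2 + c3 * (x3 - a)^2"
      using mid_pos[OF x(1-3), of a] unfolding c2_def c3_def by simp
  qed (use x in auto)
  have T2: "(0 *\<^sub>R ?R x2 x1 + 0 *\<^sub>R ?R x2 x2 + c3 *\<^sub>R ?R x2 x3) - (0 *\<^sub>R ?R x3 x1 + 0 *\<^sub>R ?R x3 x2 + c3 *\<^sub>R ?R x3 x3) \<in> P"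
  proof (rule piece[OF P _ _ der])
    show "{x2..x3} \<subseteq> J" using sub x by auto
    fix a show "0 \<le> 0 * (x1 - a)^2 + 0 * (x2 - a)^2 + c3 * (x3 - a)^2"
      using c3pos by simp
  qed (use x in auto)
  have sum: "(c1 *\<^sub>R ?R x0 x1 + c2 *\<^sub>R ?R x0 x2 + c3 *\<^sub>R ?R x0 x3) \<in> P"
  proof -
    have "(c1 *\<^sub>R ?R x0 x1 + c2 *\<^sub>R ?R x0 x2 + c3 *\<^sub>R ?R x0 x3) =
      ((c1 *\<^sub>R ?R x0 x1 + c2 *\<^sub>R ?R x0 x2 + c3 *\<^sub>R ?R x0 x3) - (c1 *\<^sub>R ?R x1 x1 + c2 *\<^sub>R ?R x1 x2 + c3 *\<^sub>R ?R x1 x3))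
      + ((0 *\<^sub>R ?R x1 x1 + c2 *\<^sub>R ?R x1 x2 + c3 *\<^sub>R ?R x1 x3) - (0 *\<^sub>R ?R x2 x1 + c2 *\<^sub>R ?R x2 x2 + c3 *\<^sub>R ?R x2 x3))
      + ((0 *\<^sub>R ?R x2 x1 + 0 *\<^sub>R ?R x2 x2 + c3 *\<^sub>R ?R x2 x3) - (0 *\<^sub>R ?R x3 x1 + 0 *\<^sub>R ?R x3 x2 + c3 *\<^sub>R ?R x3 x3))"
      by simp
    then show ?thesis using T0 T1 T2 obc_facts(3)[OF P] by metis
  qed
  have eq: "divdiff3 f x0 x1 x2 x3 = c1 *\<^sub>R ?R x0 x1 + c2 *\<^sub>R ?R x0 x2 + c3 *\<^sub>R ?R x0 x3"
  proof -
    have "c1 *\<^sub>R ?R x0 x1 + c2 *\<^sub>R ?R x0 x2 + c3 *\<^sub>R ?R x0 x3 =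
       c1 *\<^sub>R f x1 + c2 *\<^sub>R f x2 + c3 *\<^sub>R f x3 - (c1 + c2 + c3) *\<^sub>R f x0
       - (c1 * (x1 - x0) + c2 * (x2 - x0) + c3 * (x3 - x0)) *\<^sub>R f1 x0
       - ((c1 * (x1 - x0)^2 + c2 * (x2 - x0)^2 + c3 * (x3 - x0)^2) / 2) *\<^sub>R f2 x0"
      unfolding Rm_def by (simp add: algebra_simps scaleR_add_left scaleR_diff_left add_divide_distrib)
    also have "\<dots> = c0 *\<^sub>R f x0 + c1 *\<^sub>R f x1 + c2 *\<^sub>R f x2 + c3 *\<^sub>R f x3"
    proof -
      have "c1 + c2 + c3 = - c0" using ids(1) by linarith
      then show ?thesis using lin sq[of x0] by (simp add: algebra_simps)
    qed
    finally show ?thesis unfolding divdiff3_def c0_def c1_def c2_def c3_def by simp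
  qed
  show ?thesis using eq sum by simp
qed



lemma back_dir:
  fixes f f1 f2 f3 :: "real \<Rightarrow> 'a::banach"
  assumes P: "ordered_banach_cone P" and I: "is_interval I" and cont: "continuous_on I f"
    and der: "\<And>t. t \<in> interior I \<Longrightarrow> (f has_vector_derivative f1 t) (at t) \<and> (f1 has_vector_derivative f2 t) (at t)
          \<and> (f2 has_vector_derivative f3 t) (at t) \<and> f3 t \<in> P"
  shows "three_convex_on P I f"
  unfolding three_convex_on_def
proof (intro allI impI, elim conjE)
  fix x0 x1 x2 x3 assume xI: "x0 \<in> I" "x1 \<in> I" "x2 \<in> I" "x3 \<in> I" and x: "x0 < x1" "x1 < x2" "x2 < x3"
  have Jiv: "is_interval (interior I)"
    using I by (simp add: is_interval_convex_1)
  have ivI: "\<And>a b t. a \<in> I \<Longrightarrow> b \<in> I \<Longrightarrow> a \<le> t \<Longrightarrow> t \<le> b \<Longrightarrow> t \<in> I"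
    using I unfolding is_interval_1 by blast
  have seg: "{x0<..<x3} \<subseteq> interior I"
    by (rule interior_maximal) (use ivI[OF xI(1) xI(4)] in auto)
  define m where "m = (x0 + x3) / 2"
  define y where "y i s = i + s * (m - i)" for i s :: real
  have ev: "eventually (\<lambda>s. divdiff3 f (y x0 s) (y x1 s) (y x2 s) (y x3 s) \<in> P) (at_right 0)"
  proof -
    have "eventually (\<lambda>s. s < 1) (at_right (0::real))"
      unfolding eventually_at_right_field by (intro exI[of _ 1]) auto
    moreover have "eventually (\<lambda>s. 0 < s) (at_right (0::real))" by (rule eventually_at_right_less)
    ultimately show ?thesis
    proof eventually_elim
      case (elim s)
      have m: "x0 < m" "m < x3" using x by (auto simp: m_def)
      have o: "y x0 s < y x1 s" "y x1 s < y x2 s" "y x2 s < y x3 s"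
      proof -
        have "y b s - y a s = (1 - s) * (b - a)" for a b by (simp add: y_def algebra_simps)
        then show "y x0 s < y x1 s" "y x1 s < y x2 s" "y x2 s < y x3 s"
          using x elim by (metis diff_gt_0_iff_gt mult_pos_pos)+
      qed
      have e0: "x0 < y x0 s" using m elim by (simp add: y_def)
      have e3: "y x3 s < x3"
      proof -
        have "s * (m - x3) < 0" using m elim by (simp add: mult_pos_neg)
        then show ?thesis by (simp add: y_def)
      qed
      have "y x0 s \<in> interior I" "y x3 s \<in> interior I"
        using seg e0 e3 o by auto
      then show ?case
        by (intro core_back[OF P Jiv der o]) auto
    qed
  qed
  have ly: "((\<lambda>s. y i s) \<longlongrightarrow> i) (at_right 0)" for i
    unfolding y_def by (rule tendsto_eq_intros | simp)+
  have lf: "((\<lambda>s. f (y i s)) \<longlongrightarrow> f i) (at_right 0)" if "i \<in> {x0..x3}" for i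
  proof (rule continuous_on_tendsto_compose[OF cont ly])
    show "i \<in> I" using that ivI[OF xI(1) xI(4)] by auto
    have "eventually (\<lambda>s. s < 1) (at_right (0::real))"
      unfolding eventually_at_right_field by (intro exI[of _ 1]) auto
    moreover have "eventually (\<lambda>s. 0 < s) (at_right (0::real))" by (rule eventually_at_right_less)
    ultimately show "eventually (\<lambda>s. y i s \<in> I) (at_right 0)"
    proof eventually_elim
      case (elim s)
      have "y i s = (1 - s) * i + s * m" by (simp add: y_def algebra_simps)
      moreover have "x0 \<le> (1 - s) * i + s * m" "(1 - s) * i + s * m \<le> x3"
      proof -
        have mm: "x0 < m" "m < x3" using x by (auto simp: m_def)
        have a: "(1-s)*x0 \<le> (1-s)*i" "(1-s)*i \<le> (1-s)*x3"
          using that elim by (auto intro!: mult_left_mono)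
        have b: "s*x0 \<le> s*m" "s*m \<le> s*x3"
          using mm elim by (auto intro!: mult_left_mono)
        show "x0 \<le> (1 - s) * i + s * m" "(1 - s) * i + s * m \<le> x3"
          using a b by (simp_all add: algebra_simps)
      qed
      ultimately show ?case using ivI[OF xI(1) xI(4)] by auto
    qed
  qed
  have lim: "((\<lambda>s. divdiff3 f (y x0 s) (y x1 s) (y x2 s) (y x3 s)) \<longlongrightarrow> divdiff3 f x0 x1 x2 x3) (at_right 0)"
    unfolding divdiff3_def
    by (intro tendsto_intros lf ly) (use x in auto)
  show "divdiff3 f x0 x1 x2 x3 \<in> P"
    by (rule Lim_in_closed_set[OF obc_facts(1)[OF P] ev _ lim]) simp
qed



definition D1 :: "(real \<Rightarrow> 'a::real_vector) \<Rightarrow> real \<Rightarrow> real \<Rightarrow> 'a" where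
  "D1 f a b = (1 / (a - b)) *\<^sub>R f a + (1 / (b - a)) *\<^sub>R f b"

definition D2 :: "(real \<Rightarrow> 'a::real_vector) \<Rightarrow> real \<Rightarrow> real \<Rightarrow> real \<Rightarrow> 'a" where
  "D2 f a b c = (1 / ((a - b) * (a - c))) *\<^sub>R f a + (1 / ((b - a) * (b - c))) *\<^sub>R f b
     + (1 / ((c - a) * (c - b))) *\<^sub>R f c"

lemma D1_sym: "D1 f a b = D1 f b a"
  by (simp add: D1_def ac_simps)

lemma D2_sym: "D2 f a b c = D2 f b a c" "D2 f a b c = D2 f a c b"
  by (simp_all add: D2_def ac_simps)

lemma D3_sym: "divdiff3 f a b c d = divdiff3 f b a c d" "divdiff3 f a b c d = divdiff3 f a c b d"
  "divdiff3 f a b c d = divdiff3 f a b d c"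
  by (simp_all add: divdiff3_def ac_simps)

lemma K2:
  assumes "a \<noteq> b" "a \<noteq> c" "b \<noteq> c"
  shows "(b - a) *\<^sub>R D2 f a b c = D1 f b c - D1 f a c"
proof -
  have l: "(b - a) *\<^sub>R D2 f a b c = ((b - a) / ((a - b) * (a - c))) *\<^sub>R f a + ((b - a) / ((b - a) * (b - c))) *\<^sub>R f b
     + ((b - a) / ((c - a) * (c - b))) *\<^sub>R f c"
    by (simp add: D2_def scaleR_add_right)
  have r: "D1 f b c - D1 f a c = (- (1 / (a - c))) *\<^sub>R f a + (1 / (b - c)) *\<^sub>R f b
     + (1 / (c - b) - 1 / (c - a)) *\<^sub>R f c"
    by (simp add: D1_def algebra_simps)
  have e1: "(b - a) / ((a - b) * (a - c)) = - (1 / (a - c))"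
    using assms by (simp add: divide_simps; simp add: algebra_simps)
  have e2: "(b - a) / ((b - a) * (b - c)) = 1 / (b - c)"
    using assms by (simp add: divide_simps)
  have e3: "(b - a) / ((c - a) * (c - b)) = 1 / (c - b) - 1 / (c - a)"
    using assms by (simp add: divide_simps; simp add: algebra_simps)
  show ?thesis unfolding l r e1 e2 e3 ..
qed

lemma K3:
  assumes "a \<noteq> b" "a \<noteq> c" "a \<noteq> d" "b \<noteq> c" "b \<noteq> d" "c \<noteq> d"
  shows "(b - a) *\<^sub>R divdiff3 f a b c d = D2 f b c d - D2 f a c d"
proof -
  have l: "(b - a) *\<^sub>R divdiff3 f a b c d =
       ((b - a) / ((a - b) * (a - c) * (a - d))) *\<^sub>R f a
     + ((b - a) / ((b - a) * (b - c) * (b - d))) *\<^sub>R f b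
     + ((b - a) / ((c - a) * (c - b) * (c - d))) *\<^sub>R f c
     + ((b - a) / ((d - a) * (d - b) * (d - c))) *\<^sub>R f d"
    by (simp add: divdiff3_def scaleR_add_right)
  have r: "D2 f b c d - D2 f a c d = (- (1 / ((a - c) * (a - d)))) *\<^sub>R f a
     + (1 / ((b - c) * (b - d))) *\<^sub>R f b
     + (1 / ((c - b) * (c - d)) - 1 / ((c - a) * (c - d))) *\<^sub>R f c
     + (1 / ((d - b) * (d - c)) - 1 / ((d - a) * (d - c))) *\<^sub>R f d"
    by (simp add: D2_def algebra_simps)
  have e1: "(b - a) / ((a - b) * (a - c) * (a - d)) = - (1 / ((a - c) * (a - d)))"
    using assms by (simp add: divide_simps; simp add: algebra_simps)
  have e2: "(b - a) / ((b - a) * (b - c) * (b - d)) = 1 / ((b - c) * (b - d))"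
    using assms by (simp add: divide_simps)
  have e3: "(b - a) / ((c - a) * (c - b) * (c - d)) = 1 / ((c - b) * (c - d)) - 1 / ((c - a) * (c - d))"
    using assms by (simp add: divide_simps; simp add: algebra_simps)
  have e4: "(b - a) / ((d - a) * (d - b) * (d - c)) = 1 / ((d - b) * (d - c)) - 1 / ((d - a) * (d - c))"
    using assms by (simp add: divide_simps; simp add: algebra_simps)
  show ?thesis unfolding l r e1 e2 e3 e4 ..
qed

lemma ev_small: "(\<delta>::real) > 0 \<Longrightarrow> eventually (\<lambda>h::real. 0 < h \<and> h < \<delta>) (at_right 0)"
  by (auto simp: eventually_at_right_field intro!: exI[of _ \<delta>])



lemma step3:
  fixes g g' :: "real \<Rightarrow> 'a::banach"
  assumes P: "ordered_banach_cone P" and J: "open J"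
    and inc: "\<And>a b. a \<in> J \<Longrightarrow> b \<in> J \<Longrightarrow> a < b \<Longrightarrow> g b - g a \<in> P"
    and der: "(g has_vector_derivative g' t) (at t)" and t: "t \<in> J"
  shows "g' t \<in> P"
proof -
  obtain e where e: "e > 0" "ball t e \<subseteq> J" using J t openE by blast
  have "eventually (\<lambda>h. (1/h) *\<^sub>R (g (t + h) - g t) \<in> P) (at_right 0)"
    using ev_small[OF e(1)]
  proof eventually_elim
    case (elim h)
    then have "t + h \<in> J" using e(2) by (auto simp: dist_norm)
    then have "g (t + h) - g t \<in> P" using inc[OF t] elim by auto
    then show ?case using obc_facts(4)[OF P] elim by auto
  qed
  from Lim_in_closed_set[OF obc_facts(1)[OF P] this _ dq_lim[OF der]] show ?thesis by simp
qed

lemma step2: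
  fixes g g' :: "real \<Rightarrow> 'a::banach"
  assumes P: "ordered_banach_cone P" and J: "open J" and iv: "is_interval J"
    and cv: "\<And>y0 y1 y2. y0 \<in> J \<Longrightarrow> y2 \<in> J \<Longrightarrow> y0 < y1 \<Longrightarrow> y1 < y2 \<Longrightarrow> D2 g y0 y1 y2 \<in> P"
    and der: "\<And>t. t \<in> J \<Longrightarrow> (g has_vector_derivative g' t) (at t)"
    and z: "z0 \<in> J" "z1 \<in> J" "z0 < z1"
  shows "g' z1 - g' z0 \<in> P"
proof -
  obtain e where e: "e > 0" "ball z1 e \<subseteq> J" using J z openE by blast
  define \<delta> where "\<delta> = min e (z1 - z0)"
  have \<delta>: "\<delta> > 0" using e z by (simp add: \<delta>_def)
  let ?Q = "\<lambda>h. (1 / (z0 - z1)) *\<^sub>R ((1/h) *\<^sub>R (g (z0 + h) - g z0)) + (1 / (z1 - z0)) *\<^sub>R ((1/h) *\<^sub>R (g (z1 + h) - g z1))"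
  have ev: "eventually (\<lambda>h. ?Q h \<in> P) (at_right 0)"
    using ev_small[OF \<delta>]
  proof eventually_elim
    case (elim h)
    then have h: "0 < h" "h < e" "h < z1 - z0" by (auto simp: \<delta>_def)
    then have zh: "z1 + h \<in> J" using e(2) by (auto simp: dist_norm)
    have B1: "h *\<^sub>R D2 g z0 (z0 + h) z1 = D1 g (z0 + h) z1 - D1 g z0 z1"
      using K2[of z0 "z0 + h" z1 g] h by simp
    have B2: "h *\<^sub>R D2 g z1 (z1 + h) (z0 + h) = D1 g (z1 + h) (z0 + h) - D1 g z1 (z0 + h)"
      using K2[of z1 "z1 + h" "z0 + h" g] h by simp
    have s2: "D2 g z1 (z1 + h) (z0 + h) = D2 g (z0 + h) z1 (z1 + h)"
      by (rule trans[OF D2_sym(2) D2_sym(1)])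
    have p1: "D2 g z0 (z0 + h) z1 \<in> P" using cv[OF z(1) z(2)] h by simp
    have "z0 \<le> z0 + h" "z0 + h \<le> z1" using h by auto
    then have z0h: "z0 + h \<in> J" using iv z(1,2) unfolding is_interval_1 by blast
    have p2: "D2 g (z0 + h) z1 (z1 + h) \<in> P" using cv[OF z0h zh] h by simp
    have "D1 g (z0 + h) (z1 + h) - D1 g z0 z1 = h *\<^sub>R (D2 g z0 (z0 + h) z1 + D2 g (z0 + h) z1 (z1 + h))"
      using B1 B2 s2 by (simp add: scaleR_add_right D1_sym[of g "z1 + h" "z0 + h"] D1_sym[of g z1 "z0 + h"])
    moreover have "?Q h = (1/h) *\<^sub>R (D1 g (z0 + h) (z1 + h) - D1 g z0 z1)"
      by (simp add: D1_def algebra_simps)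
    ultimately have "?Q h = D2 g z0 (z0 + h) z1 + D2 g (z0 + h) z1 (z1 + h)"
      using h by simp
    then show ?case using p1 p2 obc_facts(3)[OF P] by simp
  qed
  have lim: "(?Q \<longlongrightarrow> (1 / (z0 - z1)) *\<^sub>R g' z0 + (1 / (z1 - z0)) *\<^sub>R g' z1) (at_right 0)"
    by (intro tendsto_intros dq_lim der z)
  have "(1 / (z0 - z1)) *\<^sub>R g' z0 + (1 / (z1 - z0)) *\<^sub>R g' z1 \<in> P"
    by (rule Lim_in_closed_set[OF obc_facts(1)[OF P] ev _ lim]) simp
  then have "(z1 - z0) *\<^sub>R ((1 / (z0 - z1)) *\<^sub>R g' z0 + (1 / (z1 - z0)) *\<^sub>R g' z1) \<in> P"
    using obc_facts(4)[OF P] z by simp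
  moreover have "(z1 - z0) *\<^sub>R ((1 / (z0 - z1)) *\<^sub>R g' z0 + (1 / (z1 - z0)) *\<^sub>R g' z1) = g' z1 - g' z0"
  proof -
    have "(z1 - z0) / (z0 - z1) = -1" using z by (simp add: divide_simps)
    then show ?thesis using z by (simp add: scaleR_add_right)
  qed
  ultimately show ?thesis by simp
qed



lemma step1:
  fixes g g' :: "real \<Rightarrow> 'a::banach"
  assumes P: "ordered_banach_cone P" and J: "open J" and iv: "is_interval J"
    and cv: "\<And>x0 x1 x2 x3. x0 \<in> J \<Longrightarrow> x3 \<in> J \<Longrightarrow> x0 < x1 \<Longrightarrow> x1 < x2 \<Longrightarrow> x2 < x3
        \<Longrightarrow> divdiff3 g x0 x1 x2 x3 \<in> P"
    and der: "\<And>t. t \<in> J \<Longrightarrow> (g has_vector_derivative g' t) (at t)"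
    and y: "y0 \<in> J" "y2 \<in> J" "y0 < y1" "y1 < y2"
  shows "D2 g' y0 y1 y2 \<in> P"
proof -
  have ivJ: "\<And>a b t. a \<in> J \<Longrightarrow> b \<in> J \<Longrightarrow> a \<le> t \<Longrightarrow> t \<le> b \<Longrightarrow> t \<in> J"
    using iv unfolding is_interval_1 by blast
  have y1J: "y1 \<in> J" using ivJ[OF y(1,2)] y by simp
  obtain e where e: "e > 0" "ball y2 e \<subseteq> J" using J y openE by blast
  define \<delta> where "\<delta> = min e (min (y1 - y0) (y2 - y1))"
  have \<delta>: "\<delta> > 0" using e y by (simp add: \<delta>_def)
  define k0 where "k0 = 1 / ((y0 - y1) * (y0 - y2))"
  define k1 where "k1 = 1 / ((y1 - y0) * (y1 - y2))"
  define k2 where "k2 = 1 / ((y2 - y0) * (y2 - y1))"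
  let ?Q = "\<lambda>h. k0 *\<^sub>R ((1/h) *\<^sub>R (g (y0 + h) - g y0)) + k1 *\<^sub>R ((1/h) *\<^sub>R (g (y1 + h) - g y1))
     + k2 *\<^sub>R ((1/h) *\<^sub>R (g (y2 + h) - g y2))"
  have ev: "eventually (\<lambda>h. ?Q h \<in> P) (at_right 0)"
    using ev_small[OF \<delta>]
  proof eventually_elim
    case (elim h)
    then have h: "0 < h" "h < e" "h < y1 - y0" "h < y2 - y1" by (auto simp: \<delta>_def)
    then have y2h: "y2 + h \<in> J" using e(2) by (auto simp: dist_norm)
    have "y0 \<le> y0 + h" "y0 + h \<le> y2" using h by auto
    then have y0h: "y0 + h \<in> J" using ivJ[OF y(1,2)] by blast
    have "y0 \<le> y1 + h" "y1 + h \<le> y2" using h by auto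
    then have y1h: "y1 + h \<in> J" using ivJ[OF y(1,2)] by blast
    have A1: "h *\<^sub>R divdiff3 g y0 (y0 + h) y1 y2 = D2 g (y0 + h) y1 y2 - D2 g y0 y1 y2"
      using K3[of y0 "y0 + h" y1 y2 g] h y by simp
    have A2: "h *\<^sub>R divdiff3 g y1 (y1 + h) (y0 + h) y2 = D2 g (y1 + h) (y0 + h) y2 - D2 g y1 (y0 + h) y2"
      using K3[of y1 "y1 + h" "y0 + h" y2 g] h y by simp
    have A3: "h *\<^sub>R divdiff3 g y2 (y2 + h) (y0 + h) (y1 + h) = D2 g (y2 + h) (y0 + h) (y1 + h) - D2 g y2 (y0 + h) (y1 + h)"
      using K3[of y2 "y2 + h" "y0 + h" "y1 + h" g] h y by simp
    have s2a: "divdiff3 g y1 (y1 + h) (y0 + h) y2 = divdiff3 g (y0 + h) y1 (y1 + h) y2"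
      by (rule trans[OF D3_sym(2) D3_sym(1)])
    have s3a: "divdiff3 g y2 (y2 + h) (y0 + h) (y1 + h) = divdiff3 g (y0 + h) (y1 + h) y2 (y2 + h)"
      by (rule trans[OF trans[OF D3_sym(2) D3_sym(1)] trans[OF D3_sym(3) D3_sym(2)]])
    have d2a: "D2 g (y1 + h) (y0 + h) y2 = D2 g (y0 + h) (y1 + h) y2" by (rule D2_sym(1))
    have d2b: "D2 g y1 (y0 + h) y2 = D2 g (y0 + h) y1 y2" by (rule D2_sym(1))
    have d2c: "D2 g (y2 + h) (y0 + h) (y1 + h) = D2 g (y0 + h) (y1 + h) (y2 + h)"
      by (rule trans[OF D2_sym(1) D2_sym(2)])
    have d2d: "D2 g y2 (y0 + h) (y1 + h) = D2 g (y0 + h) (y1 + h) y2"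
      by (rule trans[OF D2_sym(1) D2_sym(2)])
    have p1: "divdiff3 g y0 (y0 + h) y1 y2 \<in> P" using cv[OF y(1,2)] h by simp
    have p2: "divdiff3 g (y0 + h) y1 (y1 + h) y2 \<in> P" using cv[OF y0h y(2)] h by simp
    have p3: "divdiff3 g (y0 + h) (y1 + h) y2 (y2 + h) \<in> P" using cv[OF y0h y2h] h by simp
    have sumeq: "D2 g (y0 + h) (y1 + h) (y2 + h) - D2 g y0 y1 y2 =
       h *\<^sub>R (divdiff3 g y0 (y0 + h) y1 y2 + divdiff3 g (y0 + h) y1 (y1 + h) y2 + divdiff3 g (y0 + h) (y1 + h) y2 (y2 + h))"
    proof -
      have "D2 g (y0 + h) (y1 + h) (y2 + h) - D2 g y0 y1 y2 =
         (D2 g (y0 + h) y1 y2 - D2 g y0 y1 y2) + (D2 g (y0 + h) (y1 + h) y2 - D2 g (y0 + h) y1 y2)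
         + (D2 g (y0 + h) (y1 + h) (y2 + h) - D2 g (y0 + h) (y1 + h) y2)" by simp
      also have "\<dots> = h *\<^sub>R divdiff3 g y0 (y0 + h) y1 y2 + h *\<^sub>R divdiff3 g y1 (y1 + h) (y0 + h) y2
         + h *\<^sub>R divdiff3 g y2 (y2 + h) (y0 + h) (y1 + h)"
        unfolding A1 A2 A3 d2a d2b d2c d2d ..
      finally show ?thesis unfolding s2a s3a by (simp add: scaleR_add_right)
    qed
    moreover have "?Q h = (1/h) *\<^sub>R (D2 g (y0 + h) (y1 + h) (y2 + h) - D2 g y0 y1 y2)"
      unfolding D2_def k0_def k1_def k2_def by (simp add: algebra_simps)
    ultimately have "?Q h = divdiff3 g y0 (y0 + h) y1 y2 + divdiff3 g (y0 + h) y1 (y1 + h) y2 + divdiff3 g (y0 + h) (y1 + h) y2 (y2 + h)"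
      using h by simp
    then show ?case using p1 p2 p3 obc_facts(3)[OF P] by simp
  qed
  have lim: "(?Q \<longlongrightarrow> k0 *\<^sub>R g' y0 + k1 *\<^sub>R g' y1 + k2 *\<^sub>R g' y2) (at_right 0)"
    by (intro tendsto_add tendsto_scaleR tendsto_const dq_lim der y y1J)
  have "k0 *\<^sub>R g' y0 + k1 *\<^sub>R g' y1 + k2 *\<^sub>R g' y2 \<in> P"
    by (rule Lim_in_closed_set[OF obc_facts(1)[OF P] ev _ lim]) simp
  then show ?thesis unfolding D2_def k0_def k1_def k2_def .
qed



theorem theorem10:
  fixes P :: "'a::banach set" and I :: "real set" and f f1 f2 f3 :: "real \<Rightarrow> 'a"
  assumes "ordered_banach_cone P"
    and "is_interval I"
    and "continuous_on I f"
    and "\<And>t. t \<in> interior I \<Longrightarrow> (f has_vector_derivative f1 t) (at t)"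
    and "\<And>t. t \<in> interior I \<Longrightarrow> (f1 has_vector_derivative f2 t) (at t)"
    and "\<And>t. t \<in> interior I \<Longrightarrow> (f2 has_vector_derivative f3 t) (at t)"
  shows "three_convex_on P I f \<longleftrightarrow> (\<forall>t \<in> interior I. f3 t \<in> P)"
proof
  assume "\<forall>t \<in> interior I. f3 t \<in> P"
  then show "three_convex_on P I f"
    by (intro back_dir[OF assms(1-3), of f1 f2 f3]) (use assms(4-6) in blast)
next
  assume tc: "three_convex_on P I f"
  let ?J = "interior I"
  have Jo: "open ?J" by simp
  have Jiv: "is_interval ?J" using assms(2) by (simp add: is_interval_convex_1)
  have ivJ: "\<And>a b t. a \<in> ?J \<Longrightarrow> b \<in> ?J \<Longrightarrow> a \<le> t \<Longrightarrow> t \<le> b \<Longrightarrow> t \<in> ?J"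
    using Jiv unfolding is_interval_1 by blast
  have cv: "divdiff3 f x0 x1 x2 x3 \<in> P"
    if "x0 \<in> ?J" "x3 \<in> ?J" "x0 < x1" "x1 < x2" "x2 < x3" for x0 x1 x2 x3
  proof -
    have "x1 \<in> ?J" "x2 \<in> ?J" using ivJ[OF that(1,2)] that(3-5) by auto
    then have "x0 \<in> I" "x1 \<in> I" "x2 \<in> I" "x3 \<in> I" using that(1,2) interior_subset by blast+
    then show ?thesis using tc that(3-5) unfolding three_convex_on_def by blast
  qed
  have c2: "D2 f1 y0 y1 y2 \<in> P" if "y0 \<in> ?J" "y2 \<in> ?J" "y0 < y1" "y1 < y2" for y0 y1 y2
    by (rule step1[OF assms(1) Jo Jiv cv assms(4) that])
  have inc: "f2 b - f2 a \<in> P" if "a \<in> ?J" "b \<in> ?J" "a < b" for a b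
    by (rule step2[OF assms(1) Jo Jiv c2 assms(5) that])
  show "\<forall>t \<in> interior I. f3 t \<in> P"
  proof
    fix t assume t: "t \<in> ?J"
    show "f3 t \<in> P" by (rule step3[where g'=f3, OF assms(1) Jo inc assms(6)[OF t] t])
  qed
qed

end
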